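(* Let $I$ be a finite set and let $g_\bullet\colon\mathbb{Z}\to\mathbb{Z}$ be a gp map parametrised by $\mathbb{R}^I$. Then there exist finite sets $J,K$ and a gp map $\tilde g_\bullet\colon\mathbb{Z}\to\mathbb{Z}$ parametrised by $\mathbb{Z}^J\times[0,1)^K$ such that $\tilde g_\bullet$ extends $g_\bullet$ and $\tilde g_\bullet$ takes the form \[ \tilde g_{a,\beta} = \sum_{j\in J} a_j h^{(j)}_{\beta},\qquad a\in\mathbb{Z}^J,\ \beta\in[0,1)^K, \] where for each $j\in J$, $h^{(j)}_\bullet\colon\mathbb{Z}\to\mathbb{Z}$ is a gp map parametrised by $[0,1)^K$.
   Context: A generalised polynomial (gp) map $\mathbb{R}^d\to\mathbb{R}$ is an element of the smallest family containing all polynomial maps and closed under pointwise sum, pointwise product and pointwise integer part $\lfloor\cdot\rfloor$; a map $\mathbb{R}^d\to\mathbb{R}^m$ is gp if each coordinate is. For pairwise disjoint finite sets $I_r,I_i,I_f$ and $\Omega = \mathbb{R}^{I_r}\times\mathbb{Z}^{I_i}\times[0,1)^{I_f}$, a gp map $\mathbb{Z}\to\mathbb{Z}$ parametrised by $\Omega$ is a family $(g_\alpha)_{\alpha\in\Omega}$ of maps $\mathbb{Z}\to\mathbb{Z}$ such that $(\alpha,n)\mapsto g_\alpha(n)$ is the restriction to $\Omega\times\mathbb{Z}$ of a gp map $\mathbb{R}^{I_r\cup I_i\cup I_f}\times\mathbb{R}\to\mathbb{R}$. If $g_\bullet$ is parametrised by $\Omega$ and $h_\bullet$ by $\Omega'=\mathbb{R}^{J_r}\times\mathbb{Z}^{J_i}\times[0,1)^{J_f}$,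 we say $h_\bullet$ extends $g_\bullet$ if there is a gp map $\varphi\colon\mathbb{R}^{I_r\cup I_i\cup I_f}\to\mathbb{R}^{J_r\cup J_i\cup J_f}$ with $\varphi(\Omega)\subset\Omega'$ and $g_\alpha = h_{\varphi(\alpha)}$ for all $\alpha\in\Omega$. *)

theory Defs
  imports Complex_Main
begin

inductive gp_on :: "'v set \<Rightarrow> (('v \<Rightarrow> real) \<Rightarrow> real) \<Rightarrow> bool" for V where
  gp_const: "gp_on V (\<lambda>x. c)"
| gp_proj: "v \<in> V \<Longrightarrow> gp_on V (\<lambda>x. x v)"
| gp_add: "gp_on V f \<Longrightarrow> gp_on V g \<Longrightarrow> gp_on V (\<lambda>x. f x + g x)"
| gp_mult: "gp_on V f \<Longrightarrow> gp_on V g \<Longrightarrow> gp_on V (\<lambda>x. f x * g x)"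
| gp_floor: "gp_on V f \<Longrightarrow> gp_on V (\<lambda>x. real_of_int \<lfloor>f x\<rfloor>)"

text \<open>Parameter space \<open>\<real>^Ir \<times> \<int>^Ii \<times> [0,1)^If0\<close>, coordinates indexed by naturals;
  coordinates outside \<open>Ir \<union> Ii \<union> If0\<close> are normalised to 0.\<close>
definition Omega :: "nat set \<Rightarrow> nat set \<Rightarrow> nat set \<Rightarrow> (nat \<Rightarrow> real) set" where
  "Omega Ir Ii If0 = {\<alpha>. (\<forall>i\<in>Ii. \<alpha> i \<in> \<int>) \<and> (\<forall>i\<in>If0. 0 \<le> \<alpha> i \<and> \<alpha> i < 1)
      \<and> (\<forall>i. i \<notin> Ir \<union> Ii \<union> If0 \<longrightarrow> \<alpha> i = 0)}"

text \<open>The joint map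
  \<open>(\<alpha>,n) \<mapsto> g \<alpha> n\<close> is the restriction of a gp map in the variables
  \<open>Some i\<close> (\<open>i \<in> Ir \<union> Ii \<union> If0\<close>) and \<open>None\<close> (the variable \<open>n\<close>).\<close>
definition param_gp :: "nat set \<Rightarrow> nat set \<Rightarrow> nat set \<Rightarrow> ((nat \<Rightarrow> real) \<Rightarrow> int \<Rightarrow> int) \<Rightarrow> bool" where
  "param_gp Ir Ii If0 g \<longleftrightarrow>
     finite Ir \<and> finite Ii \<and> finite If0 \<and> Ir \<inter> Ii = {} \<and> Ir \<inter> If0 = {} \<and> Ii \<inter> If0 = {} \<and>
     (\<exists>G. gp_on (insert None (Some ` (Ir \<union> Ii \<union> If0))) G \<and>
        (\<forall>\<alpha>\<in>Omega Ir Ii If0. \<forall>n::int.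
           real_of_int (g \<alpha> n) = G (\<lambda>v. case v of None \<Rightarrow> real_of_int n | Some i \<Rightarrow> \<alpha> i)))"

definition extends_gp ::
  "nat set \<Rightarrow> nat set \<Rightarrow> nat set \<Rightarrow> ((nat \<Rightarrow> real) \<Rightarrow> int \<Rightarrow> int) \<Rightarrow>
   nat set \<Rightarrow> nat set \<Rightarrow> nat set \<Rightarrow> ((nat \<Rightarrow> real) \<Rightarrow> int \<Rightarrow> int) \<Rightarrow> bool" where
  "extends_gp Jr Ji Jf0 h Ir Ii If0 g \<longleftrightarrow>
     (\<exists>\<phi> :: (nat \<Rightarrow> real) \<Rightarrow> (nat \<Rightarrow> real).
        (\<forall>j \<in> Jr \<union> Ji \<union> Jf0. gp_on (Ir \<union> Ii \<union> If0) (\<lambda>\<alpha>. \<phi> \<alpha> j)) \<and>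
        \<phi> ` Omega Ir Ii If0 \<subseteq> Omega Jr Ji Jf0 \<and>
        (\<forall>\<alpha>\<in>Omega Ir Ii If0. g \<alpha> = h (\<phi> \<alpha>)))"

end

theory Submission
  imports Defs "HOL-Library.Nat_Bijection"
begin


lemma gp_mono: "gp_on V f \<Longrightarrow> V \<subseteq> W \<Longrightarrow> gp_on W f"
  by (induction rule: gp_on.induct) (auto intro: gp_on.intros)

lemma gp_rename: "gp_on V f \<Longrightarrow> gp_on (r ` V) (\<lambda>x. f (x \<circ> r))"
proof (induction rule: gp_on.induct)
  case (gp_proj v) then show ?case using gp_on.gp_proj[of "r v" "r ` V"] by simp
qed (auto intro: gp_on.intros)

lemma gp_local: "gp_on V f \<Longrightarrow> (\<forall>v\<in>V. x v = y v) \<Longrightarrow> f x = f y"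
  by (induction rule: gp_on.induct) auto

lemma gp_sum: "finite S \<Longrightarrow> (\<And>s. s\<in>S \<Longrightarrow> gp_on V (f s)) \<Longrightarrow> gp_on V (\<lambda>x. \<Sum>s\<in>S. f s x)"
  by (induction S rule: finite_induct) (auto intro: gp_on.intros)

lemma gp_diff: assumes "gp_on V f" "gp_on V g" shows "gp_on V (\<lambda>x. f x - g x)"
proof -
  have "gp_on V (\<lambda>x. f x + (-1) * g x)" by (intro gp_on.intros assms)
  then show ?thesis by simp
qed

definition envb :: "(nat \<Rightarrow> (nat\<Rightarrow>real) \<Rightarrow> real) \<Rightarrow> (nat\<Rightarrow>real) \<Rightarrow> int \<Rightarrow> nat option \<Rightarrow> real" where
  "envb b \<alpha> n = (\<lambda>v. case v of None \<Rightarrow> real_of_int n | Some k \<Rightarrow> b k \<alpha>)"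

definition ea :: "(nat\<Rightarrow>real) \<Rightarrow> int \<Rightarrow> nat option \<Rightarrow> real" where
  "ea \<alpha> n = (\<lambda>v. case v of None \<Rightarrow> real_of_int n | Some i \<Rightarrow> \<alpha> i)"

lemma envb_rename: "envb b \<alpha> n \<circ> map_option f = envb (\<lambda>k. b (f k)) \<alpha> n"
  by (auto simp: envb_def fun_eq_iff split: option.split)

lemma image_VM: "map_option f ` insert None (Some ` M) = insert None (Some ` (f ` M))"
  by (simp add: image_image)

definition Rep :: "nat set \<Rightarrow> ((nat option \<Rightarrow> real) \<Rightarrow> real) \<Rightarrow> (nat \<Rightarrow> (nat\<Rightarrow>real) \<Rightarrow> real) \<Rightarrow> nat set \<Rightarrow> nat set
   \<Rightarrow> (nat \<Rightarrow> (nat\<Rightarrow>real) \<Rightarrow> real) \<Rightarrow> (nat \<Rightarrow> (nat option \<Rightarrow> real) \<Rightarrow> real) \<Rightarrow> bool" where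
  "Rep I F b M T C Q \<longleftrightarrow>
    (\<forall>k. gp_on I (b k)) \<and> (\<forall>k. \<forall>\<alpha>\<in>Omega I {} {}. 0 \<le> b k \<alpha> \<and> b k \<alpha> < 1) \<and>
    finite M \<and> finite T \<and> (\<forall>t. gp_on I (C t)) \<and>
    (\<forall>t. gp_on (insert None (Some ` M)) (Q t)) \<and>
    (\<forall>t. \<forall>\<alpha>\<in>Omega I {} {}. \<forall>n. Q t (envb b \<alpha> n) \<in> \<int>) \<and>
    (\<forall>\<alpha>\<in>Omega I {} {}. \<forall>n. F (ea \<alpha> n) = (\<Sum>t\<in>T. C t \<alpha> * Q t (envb b \<alpha> n)))"

lemma gp_Q_rename:
  assumes "gp_on (insert None (Some ` M)) q" "f ` M \<subseteq> M'"
  shows "gp_on (insert None (Some ` M')) (\<lambda>x. q (x \<circ> map_option f))"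
proof -
  have "gp_on (map_option f ` insert None (Some ` M)) (\<lambda>x. q (x \<circ> map_option f))"
    by (rule gp_rename[OF assms(1)])
  then show ?thesis by (rule gp_mono) (use assms(2) in auto)
qed



lemma floor_step:
  assumes R: "Rep I F b M T C Q"
  shows "\<exists>b' M' T' C' Q'. Rep I (\<lambda>x. real_of_int \<lfloor>F x\<rfloor>) b' M' T' C' Q' \<and> (\<forall>t \<alpha>. C' t \<alpha> \<in> \<int>)"
proof -
  define re where "re = map_option (\<lambda>k::nat. 2*k)"
  define b' where "b' = (\<lambda>k. if even k then b (k div 2) else (\<lambda>\<alpha>. C (k div 2) \<alpha> - real_of_int \<lfloor>C (k div 2) \<alpha>\<rfloor>))"
  define M' where "M' = (\<lambda>k. 2*k) ` M \<union> (\<lambda>t. 2*t+1) ` T"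
  define T' where "T' = (\<lambda>t. 2*t) ` T \<union> {1::nat}"
  define C' where "C' = (\<lambda>t::nat. if even t then (\<lambda>\<alpha>. real_of_int \<lfloor>C (t div 2) \<alpha>\<rfloor>) else (\<lambda>\<alpha>. 1))"
  define Q' where "Q' = (\<lambda>t::nat. if even t then (\<lambda>x. Q (t div 2) (x \<circ> re))
      else (\<lambda>x. real_of_int \<lfloor>\<Sum>s\<in>T. x (Some (2*s+1)) * Q s (x \<circ> re)\<rfloor>))"
  have gb: "\<And>k. gp_on I (b k)" and bb: "\<And>k \<alpha>. \<alpha>\<in>Omega I {} {} \<Longrightarrow> 0 \<le> b k \<alpha> \<and> b k \<alpha> < 1"
    and fM: "finite M" and fT: "finite T" and gC: "\<And>t. gp_on I (C t)"
    and gQ: "\<And>t. gp_on (insert None (Some ` M)) (Q t)"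
    and iQ: "\<And>t \<alpha> n. \<alpha>\<in>Omega I {} {} \<Longrightarrow> Q t (envb b \<alpha> n) \<in> \<int>"
    and eq: "\<And>\<alpha> n. \<alpha>\<in>Omega I {} {} \<Longrightarrow> F (ea \<alpha> n) = (\<Sum>t\<in>T. C t \<alpha> * Q t (envb b \<alpha> n))"
    using R unfolding Rep_def by auto
  have env: "envb b' \<alpha> n \<circ> re = envb b \<alpha> n" for \<alpha> n
    unfolding re_def envb_rename b'_def by simp
  have envodd: "envb b' \<alpha> n (Some (2*s+1)) = C s \<alpha> - real_of_int \<lfloor>C s \<alpha>\<rfloor>" for \<alpha> n s
    by (simp add: envb_def b'_def)
  have gQe: "gp_on (insert None (Some ` M')) (\<lambda>x. Q s (x \<circ> re))" for s
    unfolding re_def by (rule gp_Q_rename[OF gQ]) (auto simp: M'_def)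
  have r1: "\<forall>k. gp_on I (b' k)"
    by (auto simp: b'_def intro!: gb gp_diff gC gp_on.gp_floor)
  have r2: "\<forall>k. \<forall>\<alpha>\<in>Omega I {} {}. 0 \<le> b' k \<alpha> \<and> b' k \<alpha> < 1"
  proof (intro allI ballI)
    fix k \<alpha> assume a: "\<alpha> \<in> Omega I {} {}"
    show "0 \<le> b' k \<alpha> \<and> b' k \<alpha> < 1"
    proof (cases "even k")
      case True then show ?thesis using bb[OF a] by (simp add: b'_def)
    next
      case False then show ?thesis using floor_correct[of "C (k div 2) \<alpha>"] by (simp add: b'_def) linarith
    qed
  qed
  have r3: "finite M'" "finite T'" using fM fT by (auto simp: M'_def T'_def)
  have r4: "\<forall>t. gp_on I (C' t)" by (auto simp: C'_def intro: gC gp_on.intros)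
  have r5: "\<forall>t. gp_on (insert None (Some ` M')) (Q' t)"
  proof
    fix t show "gp_on (insert None (Some ` M')) (Q' t)"
    proof (cases "even t")
      case True then show ?thesis using gQe by (simp add: Q'_def)
    next
      case False
      have "gp_on (insert None (Some ` M')) (\<lambda>x. \<Sum>s\<in>T. x (Some (2*s+1)) * Q s (x \<circ> re))"
        apply (rule gp_sum[OF fT], rule gp_on.gp_mult, rule gp_on.gp_proj)
         apply (force simp: M'_def)
        apply (rule gQe)
        done
      then show ?thesis using False by (simp add: Q'_def gp_on.gp_floor)
    qed
  qed
  have r6: "\<forall>t. \<forall>\<alpha>\<in>Omega I {} {}. \<forall>n. Q' t (envb b' \<alpha> n) \<in> \<int>"
    using iQ by (auto simp: Q'_def env)
  have r7: "\<forall>\<alpha>\<in>Omega I {} {}. \<forall>n. real_of_int \<lfloor>F (ea \<alpha> n)\<rfloor> = (\<Sum>t\<in>T'. C' t \<alpha> * Q' t (envb b' \<alpha> n))"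
  proof (intro allI ballI)
    fix \<alpha> n assume a: "\<alpha> \<in> Omega I {} {}"
    define q where "q s = Q s (envb b \<alpha> n)" for s
    define X where "X = (\<Sum>s\<in>T. real_of_int \<lfloor>C s \<alpha>\<rfloor> * q s)"
    define Y where "Y = (\<Sum>s\<in>T. (C s \<alpha> - real_of_int \<lfloor>C s \<alpha>\<rfloor>) * q s)"
    have XZ: "X \<in> \<int>" unfolding X_def q_def using iQ[OF a] by (intro Ints_sum Ints_mult) auto
    have "F (ea \<alpha> n) = X + Y" unfolding eq[OF a] X_def Y_def q_def
      by (simp add: sum.distrib[symmetric] algebra_simps)
    then have L: "real_of_int \<lfloor>F (ea \<alpha> n)\<rfloor> = X + real_of_int \<lfloor>Y\<rfloor>"
      using XZ by (auto elim!: Ints_cases)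
    have disj: "(\<lambda>t. 2*t) ` T \<inter> {1::nat} = {}" by auto
    have "(\<Sum>t\<in>T'. C' t \<alpha> * Q' t (envb b' \<alpha> n)) =
        (\<Sum>t\<in>(\<lambda>t. 2*t) ` T. C' t \<alpha> * Q' t (envb b' \<alpha> n)) + C' 1 \<alpha> * Q' 1 (envb b' \<alpha> n)"
      unfolding T'_def using fT disj by (simp add: sum.union_disjoint)
    also have "(\<Sum>t\<in>(\<lambda>t. 2*t) ` T. C' t \<alpha> * Q' t (envb b' \<alpha> n)) = X"
      unfolding X_def q_def by (subst sum.reindex) (auto simp: inj_on_def C'_def Q'_def env)
    also have "C' 1 \<alpha> * Q' 1 (envb b' \<alpha> n) = real_of_int \<lfloor>Y\<rfloor>"
      unfolding Y_def q_def by (simp add: C'_def Q'_def env envodd[simplified])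
    finally show "real_of_int \<lfloor>F (ea \<alpha> n)\<rfloor> = (\<Sum>t\<in>T'. C' t \<alpha> * Q' t (envb b' \<alpha> n))"
      using L by simp
  qed
  have "Rep I (\<lambda>x. real_of_int \<lfloor>F x\<rfloor>) b' M' T' C' Q'"
    unfolding Rep_def using r1 r2 r3 r4 r5 r6 r7 by blast
  moreover have "\<forall>t \<alpha>. C' t \<alpha> \<in> \<int>" by (simp add: C'_def)
  ultimately show ?thesis by blast
qed



lemma rep_combine:
  assumes R1: "Rep I F1 b1 M1 T1 C1 Q1" and R2: "Rep I F2 b2 M2 T2 C2 Q2"
  shows "\<exists>b M T C Q. Rep I (\<lambda>x. F1 x + F2 x) b M T C Q"
    and "\<exists>b M T C Q. Rep I (\<lambda>x. F1 x * F2 x) b M T C Q"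
proof -
  define re where "re = map_option (\<lambda>k::nat. 2*k)"
  define ro where "ro = map_option (\<lambda>k::nat. 2*k+1)"
  define b where "b = (\<lambda>k::nat. if even k then b1 (k div 2) else b2 (k div 2))"
  define M where "M = (\<lambda>k. 2*k) ` M1 \<union> (\<lambda>k. 2*k+1) ` M2"
  have gb1: "\<And>k. gp_on I (b1 k)" and bb1: "\<And>k \<alpha>. \<alpha>\<in>Omega I {} {} \<Longrightarrow> 0 \<le> b1 k \<alpha> \<and> b1 k \<alpha> < 1"
    and fM1: "finite M1" and fT1: "finite T1" and gC1: "\<And>t. gp_on I (C1 t)"
    and gQ1: "\<And>t. gp_on (insert None (Some ` M1)) (Q1 t)"
    and iQ1: "\<And>t \<alpha> n. \<alpha>\<in>Omega I {} {} \<Longrightarrow> Q1 t (envb b1 \<alpha> n) \<in> \<int>"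
    and eq1: "\<And>\<alpha> n. \<alpha>\<in>Omega I {} {} \<Longrightarrow> F1 (ea \<alpha> n) = (\<Sum>t\<in>T1. C1 t \<alpha> * Q1 t (envb b1 \<alpha> n))"
    using R1 unfolding Rep_def by auto
  have gb2: "\<And>k. gp_on I (b2 k)" and bb2: "\<And>k \<alpha>. \<alpha>\<in>Omega I {} {} \<Longrightarrow> 0 \<le> b2 k \<alpha> \<and> b2 k \<alpha> < 1"
    and fM2: "finite M2" and fT2: "finite T2" and gC2: "\<And>t. gp_on I (C2 t)"
    and gQ2: "\<And>t. gp_on (insert None (Some ` M2)) (Q2 t)"
    and iQ2: "\<And>t \<alpha> n. \<alpha>\<in>Omega I {} {} \<Longrightarrow> Q2 t (envb b2 \<alpha> n) \<in> \<int>"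
    and eq2: "\<And>\<alpha> n. \<alpha>\<in>Omega I {} {} \<Longrightarrow> F2 (ea \<alpha> n) = (\<Sum>t\<in>T2. C2 t \<alpha> * Q2 t (envb b2 \<alpha> n))"
    using R2 unfolding Rep_def by auto
  have enve: "envb b \<alpha> n \<circ> re = envb b1 \<alpha> n" for \<alpha> n
    unfolding re_def envb_rename b_def by simp
  have envo: "envb b \<alpha> n \<circ> ro = envb b2 \<alpha> n" for \<alpha> n
    unfolding ro_def envb_rename b_def by simp
  have gQe: "gp_on (insert None (Some ` M)) (\<lambda>x. Q1 s (x \<circ> re))" for s
    unfolding re_def by (rule gp_Q_rename[OF gQ1]) (auto simp: M_def)
  have gQo: "gp_on (insert None (Some ` M)) (\<lambda>x. Q2 s (x \<circ> ro))" for s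
    unfolding ro_def by (rule gp_Q_rename[OF gQ2]) (auto simp: M_def)
  have c1: "\<forall>k. gp_on I (b k)" by (simp add: b_def gb1 gb2)
  have c2: "\<forall>k. \<forall>\<alpha>\<in>Omega I {} {}. 0 \<le> b k \<alpha> \<and> b k \<alpha> < 1" by (simp add: b_def bb1 bb2)
  have c3: "finite M" using fM1 fM2 by (simp add: M_def)
  {
    define T where "T = (\<lambda>t. 2*t) ` T1 \<union> (\<lambda>t. 2*t+1) ` T2"
    define C where "C = (\<lambda>t::nat. if even t then C1 (t div 2) else C2 (t div 2))"
    define Q where "Q = (\<lambda>t::nat. if even t then (\<lambda>x. Q1 (t div 2) (x \<circ> re)) else (\<lambda>x. Q2 (t div 2) (x \<circ> ro)))"
    have "finite T" using fT1 fT2 by (simp add: T_def)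
    moreover have "\<forall>t. gp_on I (C t)" by (simp add: C_def gC1 gC2)
    moreover have "\<forall>t. gp_on (insert None (Some ` M)) (Q t)" by (simp add: Q_def gQe gQo)
    moreover have "\<forall>t. \<forall>\<alpha>\<in>Omega I {} {}. \<forall>n. Q t (envb b \<alpha> n) \<in> \<int>"
      by (simp add: Q_def enve envo iQ1 iQ2)
    moreover have "\<forall>\<alpha>\<in>Omega I {} {}. \<forall>n. F1 (ea \<alpha> n) + F2 (ea \<alpha> n) = (\<Sum>t\<in>T. C t \<alpha> * Q t (envb b \<alpha> n))"
    proof (intro allI ballI)
      fix \<alpha> n assume a: "\<alpha> \<in> Omega I {} {}"
      have disj: "(\<lambda>t. 2*t) ` T1 \<inter> (\<lambda>t. 2*t+1) ` T2 = {}" by auto presburger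
      have "(\<Sum>t\<in>T. C t \<alpha> * Q t (envb b \<alpha> n)) =
          (\<Sum>t\<in>(\<lambda>t. 2*t) ` T1. C t \<alpha> * Q t (envb b \<alpha> n)) + (\<Sum>t\<in>(\<lambda>t. 2*t+1) ` T2. C t \<alpha> * Q t (envb b \<alpha> n))"
        unfolding T_def using fT1 fT2 disj by (simp add: sum.union_disjoint)
      also have "(\<Sum>t\<in>(\<lambda>t. 2*t) ` T1. C t \<alpha> * Q t (envb b \<alpha> n)) = F1 (ea \<alpha> n)"
        unfolding eq1[OF a] by (subst sum.reindex) (auto simp: inj_on_def C_def Q_def enve)
      also have "(\<Sum>t\<in>(\<lambda>t. 2*t+1) ` T2. C t \<alpha> * Q t (envb b \<alpha> n)) = F2 (ea \<alpha> n)"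
        unfolding eq2[OF a] by (subst sum.reindex) (auto simp: inj_on_def C_def Q_def envo)
      finally show "F1 (ea \<alpha> n) + F2 (ea \<alpha> n) = (\<Sum>t\<in>T. C t \<alpha> * Q t (envb b \<alpha> n))" by simp
    qed
    ultimately have "Rep I (\<lambda>x. F1 x + F2 x) b M T C Q"
      unfolding Rep_def using c1 c2 c3 by blast
    then show "\<exists>b M T C Q. Rep I (\<lambda>x. F1 x + F2 x) b M T C Q" by blast
  }
  {
    define T where "T = prod_encode ` (T1 \<times> T2)"
    define C where "C = (\<lambda>t \<alpha>. C1 (fst (prod_decode t)) \<alpha> * C2 (snd (prod_decode t)) \<alpha>)"
    define Q where "Q = (\<lambda>t x. Q1 (fst (prod_decode t)) (x \<circ> re) * Q2 (snd (prod_decode t)) (x \<circ> ro))"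
    have "finite T" using fT1 fT2 by (simp add: T_def)
    moreover have "\<forall>t. gp_on I (C t)" by (simp add: C_def gC1 gC2 gp_on.gp_mult)
    moreover have "\<forall>t. gp_on (insert None (Some ` M)) (Q t)"
      by (simp add: Q_def gQe gQo gp_on.gp_mult)
    moreover have "\<forall>t. \<forall>\<alpha>\<in>Omega I {} {}. \<forall>n. Q t (envb b \<alpha> n) \<in> \<int>"
      by (simp add: Q_def enve envo iQ1 iQ2 Ints_mult)
    moreover have "\<forall>\<alpha>\<in>Omega I {} {}. \<forall>n. F1 (ea \<alpha> n) * F2 (ea \<alpha> n) = (\<Sum>t\<in>T. C t \<alpha> * Q t (envb b \<alpha> n))"
    proof (intro allI ballI)
      fix \<alpha> n assume a: "\<alpha> \<in> Omega I {} {}"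
      have "(\<Sum>t\<in>T. C t \<alpha> * Q t (envb b \<alpha> n)) =
          (\<Sum>p\<in>T1 \<times> T2. C1 (fst p) \<alpha> * C2 (snd p) \<alpha> * (Q1 (fst p) (envb b1 \<alpha> n) * Q2 (snd p) (envb b2 \<alpha> n)))"
        unfolding T_def by (subst sum.reindex) (auto simp: inj_prod_encode C_def Q_def enve envo)
      also have "\<dots> = (\<Sum>i\<in>T1. \<Sum>j\<in>T2. (C1 i \<alpha> * Q1 i (envb b1 \<alpha> n)) * (C2 j \<alpha> * Q2 j (envb b2 \<alpha> n)))"
        by (simp add: sum.cartesian_product split_def algebra_simps)
      also have "\<dots> = F1 (ea \<alpha> n) * F2 (ea \<alpha> n)"
        unfolding eq1[OF a] eq2[OF a] by (simp add: sum_product)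
      finally show "F1 (ea \<alpha> n) * F2 (ea \<alpha> n) = (\<Sum>t\<in>T. C t \<alpha> * Q t (envb b \<alpha> n))" by simp
    qed
    ultimately have "Rep I (\<lambda>x. F1 x * F2 x) b M T C Q"
      unfolding Rep_def using c1 c2 c3 by blast
    then show "\<exists>b M T C Q. Rep I (\<lambda>x. F1 x * F2 x) b M T C Q" by blast
  }
qed

lemma rep_exists:
  assumes "gp_on (insert None (Some ` I)) F"
  shows "\<exists>b M T C Q. Rep I F b M T C Q"
  using assms
proof (induction rule: gp_on.induct)
  case (gp_const c)
  have "Rep I (\<lambda>x. c) (\<lambda>k \<alpha>. 0) {} {0} (\<lambda>t \<alpha>. c) (\<lambda>t x. 1)"
    unfolding Rep_def by (auto intro: gp_on.intros)
  then show ?case by blast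
next
  case (gp_proj v)
  show ?case
  proof (cases v)
    case None
    have "Rep I (\<lambda>x. x v) (\<lambda>k \<alpha>. 0) {} {0} (\<lambda>t \<alpha>. 1) (\<lambda>t x. x None)"
      unfolding Rep_def using None by (auto intro: gp_on.intros simp: ea_def envb_def)
    then show ?thesis by blast
  next
    case (Some i)
    with gp_proj have i: "i \<in> I" by auto
    have "Rep I (\<lambda>x. x v) (\<lambda>k \<alpha>. 0) {} {0} (\<lambda>t \<alpha>. \<alpha> i) (\<lambda>t x. 1)"
      unfolding Rep_def using Some i by (auto intro: gp_on.intros simp: ea_def envb_def)
    then show ?thesis by blast
  qed
next
  case (gp_add f g) then show ?case using rep_combine(1) by blast
next
  case (gp_mult f g) then show ?case using rep_combine(2) by blast
next
  case (gp_floor f) then show ?case using floor_step by blast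
qed



lemma case_comp: "(\<lambda>v. case v of None \<Rightarrow> r | Some i \<Rightarrow> f i) \<circ> map_option g = (\<lambda>v. case v of None \<Rightarrow> r | Some i \<Rightarrow> f (g i))"
  by (auto simp: fun_eq_iff split: option.split)

theorem proposition3p4:
  fixes I :: "nat set" and g :: "(nat \<Rightarrow> real) \<Rightarrow> int \<Rightarrow> int"
  assumes "finite I" and "param_gp I {} {} g"
  shows "\<exists>(J::nat set) (K::nat set) (h :: (nat \<Rightarrow> real) \<Rightarrow> int \<Rightarrow> int)
            (H :: nat \<Rightarrow> (nat \<Rightarrow> real) \<Rightarrow> int \<Rightarrow> int).
           finite J \<and> finite K \<and> J \<inter> K = {} \<and>
           param_gp {} J K h \<and>
           extends_gp {} J K h I {} {} g \<and>
           (\<forall>j\<in>J. param_gp {} {} K (H j)) \<and>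
           (\<forall>\<alpha>\<in>Omega {} J K. \<forall>n.
              h \<alpha> n = (\<Sum>j\<in>J. \<lfloor>\<alpha> j\<rfloor> * H j (\<lambda>i. if i \<in> K then \<alpha> i else 0) n))"
proof -
  obtain G where gG: "gp_on (insert None (Some ` I)) G"
    and hg: "\<And>\<alpha> n. \<alpha>\<in>Omega I {} {} \<Longrightarrow> real_of_int (g \<alpha> n) = G (ea \<alpha> n)"
    using assms(2) unfolding param_gp_def ea_def by auto
  obtain b0 M0 T0 C0 Q0 where "Rep I G b0 M0 T0 C0 Q0" using rep_exists[OF gG] by blast
  then obtain b M T C Q where R: "Rep I (\<lambda>x. real_of_int \<lfloor>G x\<rfloor>) b M T C Q" and CZ: "\<And>t \<alpha>. C t \<alpha> \<in> \<int>"
    using floor_step by blast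
  have gb: "\<And>k. gp_on I (b k)" and bb: "\<And>k \<alpha>. \<alpha>\<in>Omega I {} {} \<Longrightarrow> 0 \<le> b k \<alpha> \<and> b k \<alpha> < 1"
    and fM: "finite M" and fT: "finite T" and gC: "\<And>t. gp_on I (C t)"
    and gQ: "\<And>t. gp_on (insert None (Some ` M)) (Q t)"
    and iQ: "\<And>t \<alpha> n. \<alpha>\<in>Omega I {} {} \<Longrightarrow> Q t (envb b \<alpha> n) \<in> \<int>"
    and eq0: "\<And>\<alpha> n. \<alpha>\<in>Omega I {} {} \<Longrightarrow> real_of_int \<lfloor>G (ea \<alpha> n)\<rfloor> = (\<Sum>t\<in>T. C t \<alpha> * Q t (envb b \<alpha> n))"
    using R unfolding Rep_def by auto
  have eq: "real_of_int (g \<alpha> n) = (\<Sum>t\<in>T. C t \<alpha> * Q t (envb b \<alpha> n))" if a: "\<alpha>\<in>Omega I {} {}" for \<alpha> n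
    using eq0[OF a, of n] hg[OF a, of n, symmetric] by simp
  define ro where "ro = map_option (\<lambda>k::nat. 2*k+1)"
  define J where "J = (\<lambda>t::nat. 2*t) ` T"
  define K where "K = (\<lambda>k::nat. 2*k+1) ` M"
  define H where "H = (\<lambda>(j::nat) \<beta> n. \<lfloor>Q (j div 2) (ea \<beta> n \<circ> ro)\<rfloor>)"
  define h where "h = (\<lambda>\<alpha> n. \<Sum>j\<in>J. \<lfloor>\<alpha> j\<rfloor> * H j (\<lambda>i. if i \<in> K then \<alpha> i else 0) n)"
  define \<phi> where "\<phi> = (\<lambda>\<alpha> (i::nat). if i \<in> J then C (i div 2) \<alpha> else if i \<in> K then b (i div 2) \<alpha> else 0)"
  have fJ: "finite J" and fK: "finite K" using fT fM by (auto simp: J_def K_def)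
  have JK: "J \<inter> K = {}" unfolding J_def K_def by auto presburger
  have oddJ: "odd i \<Longrightarrow> i \<notin> J" for i by (auto simp: J_def)
  have gQo: "gp_on (insert None (Some ` ({} \<union> J \<union> K))) (\<lambda>x. Q s (x \<circ> ro))" for s
    unfolding ro_def by (rule gp_Q_rename[OF gQ]) (auto simp: K_def)
  have gQo': "gp_on (insert None (Some ` ({} \<union> {} \<union> K))) (\<lambda>x. Q s (x \<circ> ro))" for s
    unfolding ro_def by (rule gp_Q_rename[OF gQ]) (auto simp: K_def)
  have restr: "ea (\<lambda>i. if i \<in> K then \<alpha> i else 0) n \<circ> ro = ea \<alpha> n \<circ> ro"
    if a: "\<alpha> \<in> Omega {} J K" for \<alpha> n
  proof -
    have "(if 2*k+1 \<in> K then \<alpha> (2*k+1) else 0) = \<alpha> (2*k+1)" for k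
      using a oddJ[of "2*k+1"] unfolding Omega_def by auto
    then show ?thesis unfolding ea_def ro_def case_comp by simp
  qed
  have P1: "param_gp {} J K h"
    unfolding param_gp_def
  proof (intro conjI)
    show "finite ({}::nat set)" by simp
    show "\<exists>G. gp_on (insert None (Some ` ({} \<union> J \<union> K))) G \<and>
      (\<forall>\<alpha>\<in>Omega {} J K. \<forall>n. real_of_int (h \<alpha> n) = G (\<lambda>v. case v of None \<Rightarrow> real_of_int n | Some i \<Rightarrow> \<alpha> i))"
    proof (intro exI conjI ballI allI)
      show "gp_on (insert None (Some ` ({} \<union> J \<union> K))) (\<lambda>x. \<Sum>j\<in>J. x (Some j) * real_of_int \<lfloor>Q (j div 2) (x \<circ> ro)\<rfloor>)"
        apply (rule gp_sum[OF fJ], rule gp_on.gp_mult, rule gp_on.gp_proj)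
         apply simp
        apply (rule gp_on.gp_floor, rule gQo)
        done
    next
      fix \<alpha> n assume a: "\<alpha> \<in> Omega {} J K"
      have fl: "real_of_int \<lfloor>\<alpha> j\<rfloor> = \<alpha> j" if "j \<in> J" for j
        using a that unfolding Omega_def by (auto elim!: Ints_cases)
      show "real_of_int (h \<alpha> n) = (\<lambda>x. \<Sum>j\<in>J. x (Some j) * real_of_int \<lfloor>Q (j div 2) (x \<circ> ro)\<rfloor>)
          (\<lambda>v. case v of None \<Rightarrow> real_of_int n | Some i \<Rightarrow> \<alpha> i)"
        unfolding h_def H_def restr[OF a] by (auto simp: ea_def fl intro!: sum.cong)
    qed
  qed (use fJ fK JK in auto)
  have P2: "\<forall>j\<in>J. param_gp {} {} K (H j)"
  proof
    fix j assume "j \<in> J"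
    show "param_gp {} {} K (H j)"
      unfolding param_gp_def
    proof (intro conjI)
      show "\<exists>G. gp_on (insert None (Some ` ({} \<union> {} \<union> K))) G \<and>
       (\<forall>\<alpha>\<in>Omega {} {} K. \<forall>n. real_of_int (H j \<alpha> n) = G (\<lambda>v. case v of None \<Rightarrow> real_of_int n | Some i \<Rightarrow> \<alpha> i))"
        by (rule exI[of _ "\<lambda>x. real_of_int \<lfloor>Q (j div 2) (x \<circ> ro)\<rfloor>"])
           (auto simp: H_def ea_def intro!: gp_on.gp_floor gQo'[simplified])
    qed (use fK in auto)
  qed
  have P3: "extends_gp {} J K h I {} {} g"
    unfolding extends_gp_def
  proof (intro exI[of _ \<phi>] conjI ballI)
    fix j assume "j \<in> {} \<union> J \<union> K"
    then show "gp_on (I \<union> {} \<union> {}) (\<lambda>\<alpha>. \<phi> \<alpha> j)"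
    proof (cases "j \<in> J")
      case True then show ?thesis by (simp add: \<phi>_def gC)
    next
      case False then show ?thesis using \<open>j \<in> {} \<union> J \<union> K\<close> by (simp add: \<phi>_def gb)
    qed
  next
    show "\<phi> ` Omega I {} {} \<subseteq> Omega {} J K"
    proof
      fix x assume "x \<in> \<phi> ` Omega I {} {}"
      then obtain \<alpha> where a: "\<alpha> \<in> Omega I {} {}" and x: "x = \<phi> \<alpha>" by blast
      show "x \<in> Omega {} J K"
        unfolding Omega_def x \<phi>_def using JK bb[OF a] CZ by auto
    qed
  next
    fix \<alpha> assume a: "\<alpha> \<in> Omega I {} {}"
    show "g \<alpha> = h (\<phi> \<alpha>)"
    proof
      fix n
      have loc: "Q t (ea (\<lambda>i. if i \<in> K then \<phi> \<alpha> i else 0) n \<circ> ro) = Q t (envb b \<alpha> n)" if "t \<in> T" for t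
      proof (rule gp_local[OF gQ], intro ballI)
        fix v assume v: "v \<in> insert None (Some ` M)"
        show "(ea (\<lambda>i. if i \<in> K then \<phi> \<alpha> i else 0) n \<circ> ro) v = envb b \<alpha> n v"
          using v oddJ unfolding ea_def envb_def ro_def \<phi>_def K_def by auto
      qed
      have "real_of_int (h (\<phi> \<alpha>) n) = (\<Sum>t\<in>T. real_of_int \<lfloor>C t \<alpha>\<rfloor> * real_of_int \<lfloor>Q t (envb b \<alpha> n)\<rfloor>)"
        unfolding h_def H_def J_def
        by (subst sum.reindex) (auto simp: inj_on_def loc \<phi>_def J_def)
      also have "\<dots> = (\<Sum>t\<in>T. C t \<alpha> * Q t (envb b \<alpha> n))"
        using CZ iQ[OF a] by (intro sum.cong refl) (auto elim!: Ints_cases)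
      also have "\<dots> = real_of_int (g \<alpha> n)" using eq[OF a] by simp
      finally show "g \<alpha> n = h (\<phi> \<alpha>) n" by simp
    qed
  qed
  have P4: "\<forall>\<alpha>\<in>Omega {} J K. \<forall>n. h \<alpha> n = (\<Sum>j\<in>J. \<lfloor>\<alpha> j\<rfloor> * H j (\<lambda>i. if i \<in> K then \<alpha> i else 0) n)"
    by (simp add: h_def)
  show ?thesis using fJ fK JK P1 P2 P3 P4 by blast
qed


end
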